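(* Let $\beta\in(\frac{1+\sqrt5}{2},2)$ and let $(\eta_i)$ be the quasi-greedy expansion of $1$. If there exists $k_0\ge1$ such that $\overline{\eta_{k_0+1}\eta_{k_0+2}\cdots}>\eta_1\eta_2\cdots$ in the lexicographic order, then some point of the quasi-greedy orbit of $1$ lies in the open interval $(\beta^{-1},\beta^{-1}(\beta-1)^{-1})$.
   Context: The quasi-greedy expansion $(\eta_i)$ of $1$ equals the greedy $\beta$-expansion of $1$ (generated by $G(x)=\beta x\bmod1$ on $[0,1)$, $G(x)=\beta x-1$ on $[1,(\beta-1)^{-1}]$, digits $\lfloor \beta G^{n-1}(1)\rfloor$) if that is infinite; if the greedy expansion is $a_1\cdots a_n0^\infty$ with $a_n=1$, then $(\eta_i)=(a_1\cdots a_{n-1}(a_n-1))^\infty$. The quasi-greedy orbit of $1$ is $Q^i(1)=\sum_{j\ge1}\eta_{i+j}\beta^{-j}$, $i\ge1$. The bar denotes digitwise reflection $a\mapsto1-a$. *)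

theory Defs
  imports Complex_Main
begin

definition greedy_map :: "real \<Rightarrow> real \<Rightarrow> real" where
  "greedy_map \<beta> x = (if x < 1 then \<beta> * x - of_int \<lfloor>\<beta> * x\<rfloor> else \<beta> * x - 1)"

definition greedy_digit :: "real \<Rightarrow> nat \<Rightarrow> nat" where
  "greedy_digit \<beta> n = nat \<lfloor>\<beta> * (greedy_map \<beta> ^^ (n - 1)) 1\<rfloor>"

definition greedy_infinite :: "real \<Rightarrow> bool" where
  "greedy_infinite \<beta> = (\<forall>m. \<exists>n>m. greedy_digit \<beta> n \<noteq> 0)"

text \<open>Quasi-greedy expansion of 1, indexed from 1 (index 0 is irrelevant).
  If the greedy expansion is a_1...a_n 0^infinity with a_n the last nonzero digit,
  the quasi-greedy expansion is (a_1 ... a_(n-1) (a_n - 1))^infinity.\<close>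
definition quasi_greedy :: "real \<Rightarrow> nat \<Rightarrow> nat" where
  "quasi_greedy \<beta> i =
     (if greedy_infinite \<beta> then greedy_digit \<beta> i
      else (let n = (GREATEST k. greedy_digit \<beta> k \<noteq> 0);
                r = (i - 1) mod n + 1
            in if r = n then greedy_digit \<beta> n - 1 else greedy_digit \<beta> r))"

definition qg_orbit :: "real \<Rightarrow> nat \<Rightarrow> real" where
  "qg_orbit \<beta> i = (\<Sum>j. real (quasi_greedy \<beta> (i + j + 1)) / \<beta> ^ (j + 1))"

definition lex_gt :: "(nat \<Rightarrow> nat) \<Rightarrow> (nat \<Rightarrow> nat) \<Rightarrow> bool" where
  "lex_gt x y = (\<exists>n\<ge>1. (\<forall>j. 1 \<le> j \<and> j < n \<longrightarrow> x j = y j) \<and> x n > y n)"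

end

theory Submission
  imports Defs
begin

abbreviation GG :: "real \<Rightarrow> nat \<Rightarrow> real" where "GG b m \<equiv> (greedy_map b ^^ m) 1"

lemma G_bounds:
  assumes b1: "1 < \<beta>" and b2: "\<beta> < 2"
  shows "0 \<le> GG \<beta> m \<and> GG \<beta> m \<le> 1 \<and> (m \<ge> 1 \<longrightarrow> GG \<beta> m < 1)"
proof (induction m)
  case 0 then show ?case by simp
next
  case (Suc m)
  define x where "x = GG \<beta> m"
  have G: "GG \<beta> (Suc m) = greedy_map \<beta> x" by (simp add: x_def)
  show ?case
  proof (cases "x < 1")
    case True
    have "greedy_map \<beta> x = \<beta> * x - of_int \<lfloor>\<beta> * x\<rfloor>" using True by (simp add: greedy_map_def)
    moreover have "of_int \<lfloor>\<beta> * x\<rfloor> \<le> \<beta> * x" by (rule of_int_floor_le)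
    moreover have "\<beta> * x < of_int \<lfloor>\<beta> * x\<rfloor> + 1" by (rule real_of_int_floor_add_one_gt)
    ultimately show ?thesis using G by linarith
  next
    case False
    then have "x = 1" using Suc x_def by linarith
    then have "greedy_map \<beta> x = \<beta> - 1" by (simp add: greedy_map_def)
    then show ?thesis using G b1 b2 by linarith
  qed
qed

lemma digit_le:
  assumes b1: "1 < \<beta>" and b2: "\<beta> < 2"
  shows "greedy_digit \<beta> k \<le> 1"
proof -
  define x where "x = GG \<beta> (k - 1)"
  have "0 \<le> x" "x \<le> 1" using G_bounds[OF b1 b2, of "k-1"] x_def by auto
  then have "\<beta> * x \<le> \<beta> * 1" using b1 by (intro mult_left_mono) auto
  then have "\<beta> * x < 2" using b2 by simp
  then have "\<lfloor>\<beta> * x\<rfloor> \<le> 1" by linarith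
  then have "nat \<lfloor>\<beta> * x\<rfloor> \<le> 1" by linarith
  then show ?thesis unfolding greedy_digit_def x_def .
qed

lemma G_rec:
  assumes b1: "1 < \<beta>" and b2: "\<beta> < 2"
  shows "\<beta> * GG \<beta> m = real (greedy_digit \<beta> (Suc m)) + GG \<beta> (Suc m)"
proof -
  define x where "x = GG \<beta> m"
  have x: "0 \<le> x" "x \<le> 1" using G_bounds[OF b1 b2, of m] x_def by auto
  have G: "GG \<beta> (Suc m) = greedy_map \<beta> x" by (simp add: x_def)
  have d: "greedy_digit \<beta> (Suc m) = nat \<lfloor>\<beta> * x\<rfloor>" by (simp add: greedy_digit_def x_def)
  have "0 \<le> \<beta> * x" using x b1 by simp
  then have fl: "real (nat \<lfloor>\<beta> * x\<rfloor>) = of_int \<lfloor>\<beta> * x\<rfloor>" by simp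
  show ?thesis
  proof (cases "x < 1")
    case True
    then show ?thesis using G d fl by (simp add: greedy_map_def x_def)
  next
    case False
    then have "x = 1" using x by linarith
    moreover have "\<lfloor>\<beta>\<rfloor> = 1" using b1 b2 by (simp add: floor_eq_iff)
    ultimately show ?thesis using G d by (simp add: greedy_map_def x_def)
  qed
qed

lemma d1: assumes b1: "1 < \<beta>" and b2: "\<beta> < 2" shows "greedy_digit \<beta> 1 = 1"
proof -
  have "\<lfloor>\<beta>\<rfloor> = 1" using b1 b2 by (simp add: floor_eq_iff)
  then show ?thesis by (simp add: greedy_digit_def)
qed

lemma qg_inf:
  assumes b1: "1 < \<beta>" and b2: "\<beta> < 2" and inf: "greedy_infinite \<beta>"
  shows "(\<forall>m. quasi_greedy \<beta> m \<le> 1) \<and>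
    (\<exists>g. (\<forall>m. 0 \<le> g m \<and> g m \<le> 1) \<and> g 0 = 1 \<and> (\<forall>m. \<beta> * g m = real (quasi_greedy \<beta> (Suc m)) + g (Suc m))) \<and>
    (\<forall>M. \<exists>m>M. quasi_greedy \<beta> m \<noteq> 0)"
proof -
  have q: "quasi_greedy \<beta> i = greedy_digit \<beta> i" for i using inf by (simp add: quasi_greedy_def)
  show ?thesis
  proof (intro conjI allI exI[of _ "GG \<beta>"])
    show "quasi_greedy \<beta> m \<le> 1" for m using q digit_le[OF b1 b2] by simp
    show "0 \<le> GG \<beta> m" "GG \<beta> m \<le> 1" for m using G_bounds[OF b1 b2] by auto
    show "GG \<beta> 0 = 1" by simp
    show "\<beta> * GG \<beta> m = real (quasi_greedy \<beta> (Suc m)) + GG \<beta> (Suc m)" for m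
      using G_rec[OF b1 b2] q by simp
    show "\<exists>m>M. quasi_greedy \<beta> m \<noteq> 0" for M using inf q by (simp add: greedy_infinite_def)
  qed
qed

lemma qg_fin:
  assumes b1: "1 < \<beta>" and b2: "\<beta> < 2" and fin: "\<not> greedy_infinite \<beta>"
  shows "(\<forall>m. quasi_greedy \<beta> m \<le> 1) \<and>
    (\<exists>g. (\<forall>m. 0 \<le> g m \<and> g m \<le> 1) \<and> g 0 = 1 \<and> (\<forall>m. \<beta> * g m = real (quasi_greedy \<beta> (Suc m)) + g (Suc m))) \<and>
    (\<forall>M. \<exists>m>M. quasi_greedy \<beta> m \<noteq> 0)"
proof -
  define d where "d = greedy_digit \<beta>"
  define N where "N = (GREATEST k. d k \<noteq> 0)"
  obtain M where M: "\<And>n. n > M \<Longrightarrow> d n = 0" using fin unfolding greedy_infinite_def d_def by auto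
  have bnd: "\<And>y. d y \<noteq> 0 \<Longrightarrow> y \<le> M" using M by (meson not_le)
  have d1': "d 1 = 1" using d1[OF b1 b2] d_def by simp
  have dN: "d N \<noteq> 0" unfolding N_def by (rule GreatestI_nat[of _ 1 M]) (use d1' bnd in auto)
  have aboveN: "d k = 0" if "k > N" for k
  proof (rule ccontr)
    assume "d k \<noteq> 0"
    then have "k \<le> N" unfolding N_def by (rule Greatest_le_nat[of _ _ M]) (use bnd in auto)
    then show False using that by simp
  qed
  have N1: "N \<ge> 1" unfolding N_def by (rule Greatest_le_nat[of _ 1 M]) (use d1' bnd in auto)
  have dN1: "d N = 1" using dN digit_le[OF b1 b2, of N] d_def by simp
  have rec: "\<beta> * GG \<beta> m = real (d (Suc m)) + GG \<beta> (Suc m)" for m using G_rec[OF b1 b2] d_def by simp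
  have pw: "GG \<beta> (N + j) = \<beta> ^ j * GG \<beta> N" for j
  proof (induction j)
    case 0 then show ?case by simp
  next
    case (Suc j)
    have "\<beta> * GG \<beta> (N + j) = GG \<beta> (Suc (N + j))" using rec[of "N+j"] aboveN[of "Suc (N+j)"] by simp
    then show ?case using Suc by simp
  qed
  have GN: "GG \<beta> N = 0"
  proof (rule ccontr)
    assume "GG \<beta> N \<noteq> 0"
    then have pos: "GG \<beta> N > 0" using G_bounds[OF b1 b2, of N] by simp
    obtain j where j: "1 / GG \<beta> N < \<beta> ^ j" using real_arch_pow[OF b1] by blast
    then have "1 < \<beta> ^ j * GG \<beta> N" using pos by (simp add: field_simps)
    moreover have "GG \<beta> (N + j) < 1" using G_bounds[OF b1 b2, of "N+j"] N1 by simp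
    ultimately show False using pw by simp
  qed
  have N2: "N \<ge> 2"
  proof (rule ccontr)
    assume "\<not> N \<ge> 2"
    then have "N = 1" using N1 by simp
    then have "\<beta> * 1 = 1 + 0" using rec[of 0] GN dN1 by simp
    then show False using b1 by simp
  qed
  have q: "quasi_greedy \<beta> i = (if (i - 1) mod N + 1 = N then d N - 1 else d ((i - 1) mod N + 1))" for i
    using fin by (simp add: quasi_greedy_def d_def N_def Let_def)
  show ?thesis
  proof (intro conjI allI exI[of _ "\<lambda>m. GG \<beta> (m mod N)"])
    show "quasi_greedy \<beta> m \<le> 1" for m using q[of m] digit_le[OF b1 b2] d_def by auto
    show "0 \<le> GG \<beta> (m mod N)" "GG \<beta> (m mod N) \<le> 1" for m using G_bounds[OF b1 b2] by auto
    show "GG \<beta> (0 mod N) = 1" by simp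
    show "\<beta> * GG \<beta> (m mod N) = real (quasi_greedy \<beta> (Suc m)) + GG \<beta> (Suc m mod N)" for m
    proof (cases "Suc (m mod N) = N")
      case True
      then have "Suc m mod N = 0" by (simp add: mod_Suc)
      moreover have "quasi_greedy \<beta> (Suc m) = 0" using q[of "Suc m"] True dN1 by simp
      moreover have "\<beta> * GG \<beta> (m mod N) = 1" using rec[of "m mod N"] True GN dN1 by simp
      ultimately show ?thesis by simp
    next
      case False
      then have "Suc m mod N = Suc (m mod N)" by (simp add: mod_Suc)
      moreover have "quasi_greedy \<beta> (Suc m) = d (Suc (m mod N))" using q[of "Suc m"] False by simp
      ultimately show ?thesis using rec[of "m mod N"] by simp
    qed
    show "\<exists>m>M'. quasi_greedy \<beta> m \<noteq> 0" for M'
    proof (intro exI conjI)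
      have "Suc M' * 1 \<le> Suc M' * N" using N1 by (intro mult_le_mono2) auto
      then show "Suc ((Suc M') * N) > M'" by simp
      have "(Suc (Suc M' * N) - 1) mod N + 1 = 1" by simp
      then show "quasi_greedy \<beta> (Suc (Suc M' * N)) \<noteq> 0" using q[of "Suc (Suc M' * N)"] N2 d1' by simp
    qed
  qed
qed

lemma qg_props:
  assumes b1: "1 < \<beta>" and b2: "\<beta> < 2"
  shows "(\<forall>m. quasi_greedy \<beta> m \<le> 1) \<and>
    (\<exists>g. (\<forall>m. 0 \<le> g m \<and> g m \<le> 1) \<and> g 0 = 1 \<and> (\<forall>m. \<beta> * g m = real (quasi_greedy \<beta> (Suc m)) + g (Suc m))) \<and>
    (\<forall>M. \<exists>m>M. quasi_greedy \<beta> m \<noteq> 0)"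
  using qg_inf[OF b1 b2] qg_fin[OF b1 b2] by blast

lemma orbit_props:
  assumes b1: "1 < \<beta>" and le1: "\<And>m. quasi_greedy \<beta> m \<le> 1"
  shows "\<beta> * qg_orbit \<beta> m = real (quasi_greedy \<beta> (Suc m)) + qg_orbit \<beta> (Suc m)"
    and "0 \<le> qg_orbit \<beta> m" and "qg_orbit \<beta> m \<le> \<beta> / (\<beta> - 1)"
proof -
  define f where "f m j = real (quasi_greedy \<beta> (m + j + 1)) / \<beta> ^ (j + 1)" for m j
  have Q: "qg_orbit \<beta> m = suminf (f m)" for m unfolding qg_orbit_def f_def by (rule refl)
  have ib: "norm (1 / \<beta>) < 1" using b1 by simp
  have sg: "summable (\<lambda>j. (1 / \<beta>) ^ j)" using summable_geometric[OF ib] .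
  have fnn: "0 \<le> f m j" for m j using b1 by (simp add: f_def)
  have fle: "f m j \<le> (1 / \<beta>) ^ j" for m j
  proof -
    have "f m j \<le> 1 / \<beta> ^ (j + 1)" using le1[of "m+j+1"] b1
      by (simp add: f_def divide_right_mono)
    also have "\<dots> \<le> 1 / \<beta> ^ j" using b1 by (simp add: frac_le)
    finally show ?thesis by (simp add: power_one_over)
  qed
  have sf: "summable (f m)" for m
    by (rule summable_comparison_test'[OF sg, of 0]) (use fnn fle in auto)
  show "0 \<le> qg_orbit \<beta> m" unfolding Q using sf fnn by (simp add: suminf_nonneg)
  have "suminf (f m) \<le> (\<Sum>j. (1 / \<beta>) ^ j)" by (rule suminf_le[OF fle sf sg])
  also have "\<dots> = \<beta> / (\<beta> - 1)" using suminf_geometric[OF ib] b1 by (simp add: field_simps)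
  finally show "qg_orbit \<beta> m \<le> \<beta> / (\<beta> - 1)" unfolding Q .
  have sh: "f m (Suc j) = f (Suc m) j / \<beta>" for j by (simp add: f_def)
  have "(\<Sum>j. f m (Suc j)) = suminf (f m) - f m 0" by (rule suminf_split_head[OF sf])
  moreover have "(\<Sum>j. f m (Suc j)) = suminf (f (Suc m)) / \<beta>" unfolding sh by (rule suminf_divide[OF sf])
  ultimately have "suminf (f m) = f m 0 + suminf (f (Suc m)) / \<beta>" by simp
  then show "\<beta> * qg_orbit \<beta> m = real (quasi_greedy \<beta> (Suc m)) + qg_orbit \<beta> (Suc m)"
    unfolding Q using b1 by (simp add: f_def field_simps)
qed

lemma unique_rec:
  fixes q g e :: "nat \<Rightarrow> real"
  assumes b1: "1 < \<beta>" and rq: "\<And>m. \<beta> * q m = e m + q (Suc m)" and rg: "\<And>m. \<beta> * g m = e m + g (Suc m)"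
    and bq: "\<And>m. \<bar>q m - g m\<bar> \<le> C"
  shows "q m = g m"
proof (rule ccontr)
  define D where "D m = q m - g m" for m
  have Ds: "D (Suc m) = \<beta> * D m" for m
  proof -
    have "\<beta> * (q m - g m) = \<beta> * q m - \<beta> * g m" by (simp add: right_diff_distrib)
    then show ?thesis using rq[of m] rg[of m] unfolding D_def by linarith
  qed
  have Dp: "D (m + k) = \<beta> ^ k * D m" for k by (induction k) (simp_all add: Ds)
  assume "q m \<noteq> g m"
  then have pos: "\<bar>D m\<bar> > 0" by (simp add: D_def)
  obtain k where k: "C / \<bar>D m\<bar> < \<beta> ^ k" using real_arch_pow[OF b1] by blast
  then have "C < \<beta> ^ k * \<bar>D m\<bar>" using pos by (simp add: field_simps)
  also have "\<dots> = \<bar>D (m + k)\<bar>" using Dp b1 by (simp add: abs_mult)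
  finally show False using bq[of "m+k"] by (simp add: D_def)
qed

theorem lemma3p10:
  fixes \<beta> :: real and k0 :: nat
  assumes "(1 + sqrt 5) / 2 < \<beta>" and "\<beta> < 2"
    and "k0 \<ge> 1"
    and "lex_gt (\<lambda>j. 1 - quasi_greedy \<beta> (k0 + j)) (quasi_greedy \<beta>)"
  shows "\<exists>i\<ge>1. 1 / \<beta> < qg_orbit \<beta> i \<and> qg_orbit \<beta> i < 1 / (\<beta> * (\<beta> - 1))"
proof -
  have s5: "1 < sqrt 5" by simp
  have "1 < (1 + sqrt 5) / 2" using s5 by simp
  then have b1: "1 < \<beta>" using assms(1) by linarith
  have b2: "\<beta> < 2" using assms(2) .
  have "sqrt 5 < 2 * \<beta> - 1" using assms(1) by (simp add: field_simps)
  then have "(sqrt 5) ^ 2 < (2 * \<beta> - 1) ^ 2" by (intro power_strict_mono) auto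
  then have "5 < (2 * \<beta> - 1) ^ 2" by simp
  then have phi: "\<beta> * (\<beta> - 1) > 1" by (simp add: power2_eq_square algebra_simps)
  define e where "e = quasi_greedy \<beta>"
  define Q where "Q = qg_orbit \<beta>"
  have ele: "e m \<le> 1" for m using qg_props[OF b1 b2] e_def by blast
  obtain g where g: "\<And>m. 0 \<le> g m \<and> g m \<le> 1" "g 0 = 1"
    "\<And>m. \<beta> * g m = real (e (Suc m)) + g (Suc m)"
    using qg_props[OF b1 b2] e_def by blast
  have C: "\<forall>M. \<exists>m>M. e m \<noteq> 0" using qg_props[OF b1 b2] e_def by blast
  have Qrec: "\<beta> * Q m = real (e (Suc m)) + Q (Suc m)" for m
    using orbit_props(1)[OF b1, of m] qg_props[OF b1 b2] by (simp add: e_def Q_def)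
  have Qb: "0 \<le> Q m \<and> Q m \<le> \<beta> / (\<beta> - 1)" for m
    using orbit_props(2,3)[OF b1, of m] qg_props[OF b1 b2] by (simp add: Q_def)
  have Qg: "Q m = g m" for m
  proof (rule unique_rec[OF b1, of Q "\<lambda>m. real (e (Suc m))" g "\<beta> / (\<beta> - 1) + 1"])
    show "\<beta> * Q m = real (e (Suc m)) + Q (Suc m)" for m by (rule Qrec)
    show "\<beta> * g m = real (e (Suc m)) + g (Suc m)" for m by (rule g(3))
    show "\<bar>Q m - g m\<bar> \<le> \<beta> / (\<beta> - 1) + 1" for m using Qb[of m] g(1)[of m] by linarith
  qed
  have Q01: "0 \<le> Q m" "Q m \<le> 1" for m using g(1) Qg by auto
  have Q0: "Q 0 = 1" using g(2) Qg by simp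
  have e1: "e 1 = 1"
  proof -
    have "\<beta> = real (e 1) + Q 1" using Qrec[of 0] Q0 by simp
    then have "real (e 1) > 0" using Q01[of 1] b1 by linarith
    then show ?thesis using ele[of 1] by simp
  qed
  obtain n where n: "n \<ge> 1" "\<And>j. 1 \<le> j \<Longrightarrow> j < n \<Longrightarrow> 1 - e (k0 + j) = e j"
    "1 - e (k0 + n) > e n"
    using assms(4) unfolding lex_gt_def e_def by blast
  have ekn: "e (k0 + n) = 0" using n(3) by simp
  have en: "e n = 0" using n(3) by simp
  define R where "R m = 1 / (\<beta> - 1) - Q m" for m
  have Rrec: "\<beta> * R m = 1 - real (e (Suc m)) + R (Suc m)" for m
  proof -
    have "\<beta> * R m = \<beta> / (\<beta> - 1) - \<beta> * Q m" by (simp add: R_def right_diff_distrib)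
    also have "\<beta> / (\<beta> - 1) = 1 + 1 / (\<beta> - 1)" using b1 by (simp add: field_simps)
    finally show ?thesis using Qrec[of m] unfolding R_def by linarith
  qed
  have Rpos: "R m > 0" for m
  proof -
    have "1 / (\<beta> - 1) > 1" using b1 b2 by (simp add: field_simps)
    then show ?thesis using Q01[of m] R_def by simp
  qed
  have RQ: "\<forall>j. j + t = n - 1 \<longrightarrow> R (k0 + j) > Q j" for t
  proof (induction t)
    case 0
    show ?case
    proof (intro allI impI)
      fix j assume "j + 0 = n - 1"
      then have j: "Suc j = n" using n(1) by simp
      have kn: "Suc (k0 + j) = k0 + n" using j by simp
      have "\<beta> * R (k0 + j) = 1 + R (k0 + n)" using Rrec[of "k0+j"] ekn unfolding kn by simp
      moreover have "\<beta> * Q j = Q n" using Qrec[of j] en unfolding j by simp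
      ultimately have "\<beta> * R (k0 + j) > \<beta> * Q j" using Rpos[of "k0+n"] Q01[of n] by linarith
      then show "R (k0 + j) > Q j" using b1 by simp
    qed
  next
    case (Suc t)
    show ?case
    proof (intro allI impI)
      fix j assume j: "j + Suc t = n - 1"
      then have "Suc j + t = n - 1" by simp
      then have IH: "R (k0 + Suc j) > Q (Suc j)" using Suc by blast
      have "1 - e (k0 + Suc j) = e (Suc j)" using n(2)[of "Suc j"] j by simp
      then have "1 - real (e (k0 + Suc j)) = real (e (Suc j))" using ele[of "k0 + Suc j"]
        by (metis of_nat_1 of_nat_diff)
      then have "\<beta> * R (k0 + j) > \<beta> * Q j" using Rrec[of "k0+j"] Qrec[of j] IH by simp
      then show "R (k0 + j) > Q j" using b1 by simp
    qed
  qed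
  have "R k0 > Q 0" using RQ[of "n-1"] by simp
  then have Qk0: "Q k0 < 1 / (\<beta> - 1) - 1" using Q0 R_def by simp
  have Qk0p: "Q k0 > 0"
  proof (rule ccontr)
    assume "\<not> Q k0 > 0"
    then have z: "Q k0 = 0" using Q01[of k0] by simp
    have all0: "Q (k0 + j) = 0 \<and> e (Suc (k0 + j)) = 0" for j
    proof (induction j)
      case 0
      have "real (e (Suc k0)) + Q (Suc k0) = 0" using Qrec[of k0] z by simp
      then show ?case using z Q01[of "Suc k0"] by simp
    next
      case (Suc j)
      then have "Q (k0 + Suc j) = 0" using Qrec[of "k0+j"] by simp
      moreover have "real (e (Suc (k0 + Suc j))) + Q (Suc (k0 + Suc j)) = 0"
        using Qrec[of "k0 + Suc j"] calculation by simp
      ultimately show ?case using Q01[of "Suc (k0 + Suc j)"] by simp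
    qed
    obtain m where m: "m > k0" "e m \<noteq> 0" using C by blast
    have "m = Suc (k0 + (m - k0 - 1))" using m(1) by simp
    then show False using all0[of "m - k0 - 1"] m(2) by metis
  qed
  define p where "p = (GREATEST q. q \<le> k0 \<and> e q = 1)"
  have pP: "p \<le> k0 \<and> e p = 1" unfolding p_def
    by (rule GreatestI_nat[of _ 1 k0]) (use e1 assms(3) in auto)
  have p1: "p \<ge> 1" unfolding p_def
    by (rule Greatest_le_nat[of _ 1 k0]) (use e1 assms(3) in auto)
  have abovep: "e q = 0" if "p < q" "q \<le> k0" for q
  proof (rule ccontr)
    assume "e q \<noteq> 0"
    then have "e q = 1" using ele[of q] by simp
    then have "q \<le> p" unfolding p_def by (intro Greatest_le_nat[of _ q k0]) (use that in auto)
    then show False using that by simp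
  qed
  define c where "c = 1 / (\<beta> - 1) - 1"
  have down: "\<forall>j. j + t = k0 \<longrightarrow> p \<le> j \<longrightarrow> 0 < Q j \<and> Q j < c" for t
  proof (induction t)
    case 0 then show ?case using Qk0 Qk0p c_def by simp
  next
    case (Suc t)
    show ?case
    proof (intro allI impI)
      fix j assume j: "j + Suc t = k0" "p \<le> j"
      then have IH: "0 < Q (Suc j) \<and> Q (Suc j) < c" using Suc by simp
      have "e (Suc j) = 0" using abovep[of "Suc j"] j by simp
      then have eq: "\<beta> * Q j = Q (Suc j)" using Qrec[of j] by simp
      then have "Q j = Q (Suc j) / \<beta>" using b1 by (simp add: field_simps)
      moreover have "Q (Suc j) / \<beta> \<le> Q (Suc j)" using IH b1 by (simp add: divide_le_eq)
      ultimately show "0 < Q j \<and> Q j < c" using IH b1 by simp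
    qed
  qed
  have Qp: "0 < Q p" "Q p < c" using down[of "k0 - p"] pP by auto
  have bQ: "\<beta> * Q (p - 1) = 1 + Q p" using Qrec[of "p-1"] p1 pP by simp
  have lo: "1 / \<beta> < Q (p - 1)" using bQ Qp b1 by (simp add: field_simps)
  have "\<beta> * Q (p - 1) < 1 / (\<beta> - 1)" using bQ Qp c_def by simp
  then have hi: "Q (p - 1) < 1 / (\<beta> * (\<beta> - 1))" using b1 by (simp add: field_simps)
  have "p - 1 \<noteq> 0"
  proof
    assume "p - 1 = 0"
    then have "1 < 1 / (\<beta> * (\<beta> - 1))" using hi Q0 by simp
    then show False using phi by (simp add: field_simps)
  qed
  then show ?thesis using lo hi unfolding Q_def by (intro exI[of _ "p-1"]) auto
qed

end
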